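(* Let $q \in C^1(\mathbb{R}^n,\mathbb{R})$ be a scalar function, and let $A$, $B$ and $D$ be linear differential operators with constant coefficients on functions $\mathbb{R}^n\to\mathbb{R}$ with $D = A + B$. Suppose there exist natural numbers $\lambda$ and $k$ and a sufficiently smooth function $W:\mathbb{R}^n\to\mathbb{R}$ such that $$A^{\lambda+k} W(\mathbf{x}) = q(\mathbf{x}) \quad\text{(integration condition)},\qquad B^{\lambda+1} W(\mathbf{x}) = 0 \quad\text{(annihilator condition)}.$$ Define $$Q(\mathbf{x}) := \sum_{p=0}^{\lambda} (-1)^p \binom{k+p-1}{p} A^{\lambda-p} B^p W(\mathbf{x}).$$ Then $D^k Q = q$.
   Context: Powers of operators denote repeated application, with $A^0$, $B^0$, $D^0$ the identity. *)

theory Defs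
  imports "HOL-Analysis.Analysis"
begin

definition partial :: "'n::finite \<Rightarrow> (real^'n \<Rightarrow> real) \<Rightarrow> (real^'n \<Rightarrow> real)" where
  "partial i f = (\<lambda>x. frechet_derivative f (at x) (axis i 1))"

text \<open>Iterated partial derivative along a list of coordinate directions
  (the last element of the list is applied first).\<close>
fun partials :: "'n::finite list \<Rightarrow> (real^'n \<Rightarrow> real) \<Rightarrow> (real^'n \<Rightarrow> real)" where
  "partials [] f = f"
| "partials (i # is) f = partial i (partials is f)"

text \<open>A linear differential operator with constant coefficients is given by finitely many
  real coefficients c(is), one for each monomial in the partial derivatives (a word in the
  coordinate directions); it acts as  f \<mapsto> \<Sum> c(is) \<partial>_is f.\<close>
definition const_coeff_op :: "('n::finite list \<Rightarrow> real) \<Rightarrow> bool" where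
  "const_coeff_op c \<longleftrightarrow> finite {is. c is \<noteq> 0}"

definition diffop :: "('n::finite list \<Rightarrow> real) \<Rightarrow> (real^'n \<Rightarrow> real) \<Rightarrow> (real^'n \<Rightarrow> real)" where
  "diffop c f = (\<lambda>x. \<Sum>is\<in>{is. c is \<noteq> 0}. c is * partials is f x)"

definition smooth :: "(real^'n::finite \<Rightarrow> real) \<Rightarrow> bool" where
  "smooth f \<longleftrightarrow> (\<forall>is. partials is f differentiable_on UNIV)"

definition C1 :: "(real^'n::finite \<Rightarrow> real) \<Rightarrow> bool" where
  "C1 f \<longleftrightarrow> f differentiable_on UNIV \<and> (\<forall>i. continuous_on UNIV (partial i f))"

end

theory Submission
  imports Defs
begin


lemma line_mvt:
  fixes F :: "real^'n::finite \<Rightarrow> real"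
  assumes der: "\<And>p. (F has_derivative F' p) (at p)" and h: "h > 0"
  shows "\<exists>\<xi>. 0 < \<xi> \<and> \<xi> < h \<and> F (y + h *\<^sub>R v) - F y = h * F' (y + \<xi> *\<^sub>R v) v"
proof -
  have d: "((\<lambda>s. F (y + s *\<^sub>R v)) has_derivative (\<lambda>d. F' (y + s *\<^sub>R v) (d *\<^sub>R v))) (at s within {0..h})" for s
  proof (rule has_derivative_compose[where g=F])
    show "((\<lambda>s. y + s *\<^sub>R v) has_derivative (\<lambda>d. d *\<^sub>R v)) (at s within {0..h})"
      by (auto intro!: derivative_eq_intros)
    show "(F has_derivative F' (y + s *\<^sub>R v)) (at (y + s *\<^sub>R v))" by (rule der)
  qed
  obtain \<xi> where "\<xi> \<in> {0<..<h}" and eq: "F (y + h *\<^sub>R v) - F (y + 0 *\<^sub>R v) = F' (y + \<xi> *\<^sub>R v) ((h - 0) *\<^sub>R v)"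
    using mvt_simple[OF h, of "\<lambda>s. F (y + s *\<^sub>R v)", OF d] by blast
  moreover have "F' (y + \<xi> *\<^sub>R v) (h *\<^sub>R v) = h * F' (y + \<xi> *\<^sub>R v) v"
    using has_derivative_bounded_linear[OF der] by (simp add: linear_simps)
  ultimately show ?thesis by auto
qed

lemma fd_works: "f differentiable_on UNIV \<Longrightarrow> (f has_derivative frechet_derivative f (at p)) (at p)"
  using frechet_derivative_works differentiable_on_def by blast

lemma smooth_partials: "smooth f \<Longrightarrow> partials is f differentiable_on UNIV"
  by (simp add: smooth_def)

lemma schwarz_half:
  fixes f :: "real^'n::finite \<Rightarrow> real"
  assumes sm: "smooth f" and h: "h > 0"
  shows "\<exists>\<xi> \<eta>. 0 < \<xi> \<and> \<xi> < h \<and> 0 < \<eta> \<and> \<eta> < h \<and>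
    f (x + h *\<^sub>R axis i 1 + h *\<^sub>R axis j 1) - f (x + h *\<^sub>R axis j 1) - f (x + h *\<^sub>R axis i 1) + f x
    = h * h * partial j (partial i f) (x + \<xi> *\<^sub>R axis i 1 + \<eta> *\<^sub>R axis j 1)"
proof -
  let ?ei = "axis i (1::real) :: real^'n" and ?ej = "axis j (1::real) :: real^'n"
  have f0: "f differentiable_on UNIV" using smooth_partials[OF sm, of "[]"] by simp
  have f1: "partial i f differentiable_on UNIV" using smooth_partials[OF sm, of "[i]"] by simp
  have dF: "((\<lambda>p. f (p + h *\<^sub>R ?ej) - f p) has_derivative
      (\<lambda>u. frechet_derivative f (at (p + h *\<^sub>R ?ej)) u - frechet_derivative f (at p) u)) (at p)" for p
  proof (rule has_derivative_diff)
    show "((\<lambda>p. f (p + h *\<^sub>R ?ej)) has_derivative frechet_derivative f (at (p + h *\<^sub>R ?ej))) (at p)"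
      using has_derivative_compose[where f="\<lambda>p. p + h *\<^sub>R ?ej" and f'="\<lambda>u. u", OF _ fd_works[OF f0]]
        has_derivative_add_const[OF has_derivative_ident] by blast
    show "(f has_derivative frechet_derivative f (at p)) (at p)" by (rule fd_works[OF f0])
  qed
  obtain \<xi> where \<xi>: "0 < \<xi>" "\<xi> < h" and e1:
    "f (x + h *\<^sub>R ?ei + h *\<^sub>R ?ej) - f (x + h *\<^sub>R ?ei) - (f (x + h *\<^sub>R ?ej) - f x)
     = h * (partial i f (x + \<xi> *\<^sub>R ?ei + h *\<^sub>R ?ej) - partial i f (x + \<xi> *\<^sub>R ?ei))"
    using line_mvt[OF dF h, of x ?ei] unfolding partial_def by (auto simp: algebra_simps)
  obtain \<eta> where \<eta>: "0 < \<eta>" "\<eta> < h" and e2: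
    "partial i f (x + \<xi> *\<^sub>R ?ei + h *\<^sub>R ?ej) - partial i f (x + \<xi> *\<^sub>R ?ei)
     = h * partial j (partial i f) (x + \<xi> *\<^sub>R ?ei + \<eta> *\<^sub>R ?ej)"
    using line_mvt[OF fd_works[OF f1] h, of "x + \<xi> *\<^sub>R ?ei" ?ej] unfolding partial_def[of j]
    by auto
  show ?thesis
    apply (rule exI[of _ \<xi>], rule exI[of _ \<eta>])
    using \<xi> \<eta> e1 e2 by (auto simp: algebra_simps)
qed

lemma smooth_cont: "smooth f \<Longrightarrow> isCont (partials ws f) x"
  using smooth_partials[of f ws] differentiable_imp_continuous_on continuous_on_eq_continuous_at
  by blast

lemma schwarz:
  fixes f :: "real^'n::finite \<Rightarrow> real"
  assumes sm: "smooth f"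
  shows "partial i (partial j f) = partial j (partial i f)"
proof
  fix x
  let ?P1 = "partial j (partial i f)" and ?P2 = "partial i (partial j f)"
  let ?ei = "axis i (1::real) :: real^'n" and ?ej = "axis j (1::real) :: real^'n"
  show "?P2 x = ?P1 x"
  proof (rule ccontr)
    assume ne: "?P2 x \<noteq> ?P1 x"
    define e where "e = \<bar>?P1 x - ?P2 x\<bar> / 2"
    have e: "e > 0" using ne by (simp add: e_def)
    have c1: "isCont ?P1 x" using smooth_cont[OF sm, where ws="[j,i]"] by simp
    have c2: "isCont ?P2 x" using smooth_cont[OF sm, where ws="[i,j]"] by simp
    obtain d1 where d1: "d1 > 0" "\<And>y. dist y x < d1 \<Longrightarrow> dist (?P1 y) (?P1 x) < e"
      using c1 e unfolding continuous_at_eps_delta by blast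
    obtain d2 where d2: "d2 > 0" "\<And>y. dist y x < d2 \<Longrightarrow> dist (?P2 y) (?P2 x) < e"
      using c2 e unfolding continuous_at_eps_delta by blast
    define h where "h = min d1 d2 / 4"
    have h: "h > 0" using d1 d2 by (simp add: h_def)
    obtain a b where ab: "0 < a" "a < h" "0 < b" "b < h" and E1:
      "f (x + h *\<^sub>R ?ei + h *\<^sub>R ?ej) - f (x + h *\<^sub>R ?ej) - f (x + h *\<^sub>R ?ei) + f x
       = h * h * ?P1 (x + a *\<^sub>R ?ei + b *\<^sub>R ?ej)"
      using schwarz_half[OF sm h, of x i j] by blast
    obtain a' b' where ab': "0 < a'" "a' < h" "0 < b'" "b' < h" and E2:
      "f (x + h *\<^sub>R ?ej + h *\<^sub>R ?ei) - f (x + h *\<^sub>R ?ei) - f (x + h *\<^sub>R ?ej) + f x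
       = h * h * ?P2 (x + a' *\<^sub>R ?ej + b' *\<^sub>R ?ei)"
      using schwarz_half[OF sm h, of x j i] by blast
    have "h * h * ?P1 (x + a *\<^sub>R ?ei + b *\<^sub>R ?ej) = h * h * ?P2 (x + a' *\<^sub>R ?ej + b' *\<^sub>R ?ei)"
      using E1 E2 by (simp add: algebra_simps)
    hence eq: "?P1 (x + a *\<^sub>R ?ei + b *\<^sub>R ?ej) = ?P2 (x + a' *\<^sub>R ?ej + b' *\<^sub>R ?ei)"
      using h by simp
    have n1: "dist (x + a *\<^sub>R ?ei + b *\<^sub>R ?ej) x < d1"
    proof -
      have "dist (x + a *\<^sub>R ?ei + b *\<^sub>R ?ej) x = norm (a *\<^sub>R ?ei + b *\<^sub>R ?ej)"
        by (simp add: dist_norm)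
      also have "\<dots> \<le> norm (a *\<^sub>R ?ei) + norm (b *\<^sub>R ?ej)" by (rule norm_triangle_ineq)
      also have "\<dots> = a + b" using ab by simp
      also have "\<dots> < d1" using ab h_def d1 d2 by linarith
      finally show ?thesis .
    qed
    have n2: "dist (x + a' *\<^sub>R ?ej + b' *\<^sub>R ?ei) x < d2"
    proof -
      have "dist (x + a' *\<^sub>R ?ej + b' *\<^sub>R ?ei) x = norm (a' *\<^sub>R ?ej + b' *\<^sub>R ?ei)"
        by (simp add: dist_norm)
      also have "\<dots> \<le> norm (a' *\<^sub>R ?ej) + norm (b' *\<^sub>R ?ei)" by (rule norm_triangle_ineq)
      also have "\<dots> = a' + b'" using ab' by simp
      also have "\<dots> < d2" using ab' h_def d1 d2 by linarith
      finally show ?thesis .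
    qed
    have "\<bar>?P1 x - ?P2 x\<bar> < 2 * e"
      using d1(2)[OF n1] d2(2)[OF n2] eq by (simp add: dist_real_def)
    thus False by (simp add: e_def)
  qed
qed



definition coef :: "nat \<Rightarrow> nat \<Rightarrow> real" where
  "coef k p = (-1) ^ p * real ((k + p - 1) choose p)"

lemma coef_step: "coef (Suc k) p + (if p = 0 then 0 else coef (Suc k) (p - 1)) = coef k p"
proof (cases p)
  case 0 then show ?thesis by (simp add: coef_def)
next
  case (Suc q)
  have "(Suc k + Suc q - 1) choose (Suc q) = ((k + q) choose q) + ((k + q) choose (Suc q))"
    by simp
  then show ?thesis using Suc by (simp add: coef_def algebra_simps)
qed

lemma coef0: "coef 0 p = (if p = 0 then 1 else 0)"
  by (simp add: coef_def)

lemma sum_step: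
  fixes T :: "nat \<Rightarrow> nat \<Rightarrow> real"
  assumes T0: "T 0 (Suc m) = 0"
  shows "(\<Sum>p=0..m. coef (Suc k) p * (T (Suc (m - p)) p + T (m - p) (Suc p)))
       = (\<Sum>p=0..Suc m. coef k p * T (Suc m - p) p)"
proof -
  define g where "g p = (if p = 0 then 0 else coef (Suc k) (p - 1) * T (Suc m - p) p)" for p
  have s1: "(\<Sum>p=0..m. coef (Suc k) p * T (Suc (m - p)) p) = (\<Sum>p=0..Suc m. coef (Suc k) p * T (Suc m - p) p)"
    using T0 by (simp add: Suc_diff_le)
  have "(\<Sum>p=0..m. coef (Suc k) p * T (m - p) (Suc p)) = (\<Sum>p=Suc 0..Suc m. coef (Suc k) (p - 1) * T (Suc m - p) p)"
    by (simp only: sum.shift_bounds_cl_Suc_ivl) simp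
  also have "\<dots> = (\<Sum>p=Suc 0..Suc m. g p)" by (rule sum.cong) (auto simp: g_def)
  also have "\<dots> = (\<Sum>p=0..Suc m. g p)" by (simp add: sum.atLeast_Suc_atMost g_def)
  finally have s2: "(\<Sum>p=0..m. coef (Suc k) p * T (m - p) (Suc p)) = (\<Sum>p=0..Suc m. g p)" .
  have "(\<Sum>p=0..m. coef (Suc k) p * (T (Suc (m - p)) p + T (m - p) (Suc p)))
     = (\<Sum>p=0..m. coef (Suc k) p * T (Suc (m - p)) p) + (\<Sum>p=0..m. coef (Suc k) p * T (m - p) (Suc p))"
    by (simp add: distrib_left sum.distrib)
  also have "\<dots> = (\<Sum>p=0..Suc m. coef (Suc k) p * T (Suc m - p) p + g p)"
    by (simp only: s1 s2 sum.distrib)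
  also have "\<dots> = (\<Sum>p=0..Suc m. coef k p * T (Suc m - p) p)"
  proof (rule sum.cong)
    fix p show "coef (Suc k) p * T (Suc m - p) p + g p = coef k p * T (Suc m - p) p"
      using coef_step[of k p] unfolding g_def by (cases "p = 0") (auto simp: algebra_simps, metis distrib_right mult.commute)
  qed simp
  finally show ?thesis .
qed



lemma partial_add:
  assumes "f differentiable_on UNIV" "g differentiable_on UNIV"
  shows "partial i (\<lambda>x. f x + g x) = (\<lambda>x. partial i f x + partial i g x)"
proof
  fix x
  have "((\<lambda>x. f x + g x) has_derivative (\<lambda>u. frechet_derivative f (at x) u + frechet_derivative g (at x) u)) (at x)"
    using has_derivative_add[OF fd_works[OF assms(1)] fd_works[OF assms(2)]] .
  from frechet_derivative_at[OF this] show "partial i (\<lambda>x. f x + g x) x = partial i f x + partial i g x"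
    unfolding partial_def by metis
qed

lemma partial_cmult:
  assumes "f differentiable_on UNIV"
  shows "partial i (\<lambda>x. c * f x) = (\<lambda>x. c * partial i f x)"
proof
  fix x
  have "((\<lambda>x. c * f x) has_derivative (\<lambda>u. c * frechet_derivative f (at x) u)) (at x)"
    using has_derivative_mult_right[OF fd_works[OF assms(1)]] .
  from frechet_derivative_at[OF this] show "partial i (\<lambda>x. c * f x) x = c * partial i f x"
    unfolding partial_def by metis
qed

lemma partial_zero: "partial i (\<lambda>x. 0) = (\<lambda>x. 0)"
  by (simp add: partial_def)

lemma partials_zero: "partials ws (\<lambda>x. 0) = (\<lambda>x. 0)"
  by (induction ws) (simp_all add: partial_zero)

lemma partials_append: "partials (xs @ ys) f = partials xs (partials ys f)"
  by (induction xs) auto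

lemma smooth_partials': "smooth f \<Longrightarrow> smooth (partials ws f)"
  unfolding smooth_def by (metis partials_append)

lemma smooth_zero: "smooth (\<lambda>x. 0)"
  by (simp add: smooth_def partials_zero)

lemma partials_add:
  assumes "smooth f" "smooth g"
  shows "partials ws (\<lambda>x. f x + g x) = (\<lambda>x. partials ws f x + partials ws g x)"
proof (induction ws)
  case (Cons i ws)
  then show ?case using partial_add[OF smooth_partials[OF assms(1)] smooth_partials[OF assms(2)]] by simp
qed simp

lemma smooth_add: "smooth f \<Longrightarrow> smooth g \<Longrightarrow> smooth (\<lambda>x. f x + g x)"
  by (simp add: partials_add smooth_def)

lemma partials_cmult:
  assumes "smooth f"
  shows "partials ws (\<lambda>x. c * f x) = (\<lambda>x. c * partials ws f x)"
proof (induction ws)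
  case (Cons i ws)
  then show ?case using partial_cmult[OF smooth_partials[OF assms(1)]] by simp
qed simp

lemma smooth_cmult: "smooth f \<Longrightarrow> smooth (\<lambda>x. c * f x)"
  by (simp add: partials_cmult smooth_def)

lemma smooth_sum_partials:
  assumes "\<And>s. s \<in> S \<Longrightarrow> smooth (F s)"
  shows "smooth (\<lambda>x. \<Sum>s\<in>S. F s x) \<and> (\<forall>ws. partials ws (\<lambda>x. \<Sum>s\<in>S. F s x) = (\<lambda>x. \<Sum>s\<in>S. partials ws (F s) x))"
proof (cases "finite S")
  case True
  then show ?thesis using assms
  proof (induction S rule: finite_induct)
    case empty then show ?case by (simp add: smooth_zero partials_zero)
  next
    case (insert s S)
    then have sm: "smooth (\<lambda>x. \<Sum>s\<in>S. F s x)" and eq: "\<forall>ws. partials ws (\<lambda>x. \<Sum>s\<in>S. F s x) = (\<lambda>x. \<Sum>s\<in>S. partials ws (F s) x)"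
      and fs: "smooth (F s)" by auto
    show ?case using insert(1,2) smooth_add[OF fs sm] partials_add[OF fs sm] eq by simp
  qed
next
  case False
  then show ?thesis by (simp add: smooth_zero partials_zero)
qed

lemma smooth_sum: "(\<And>s. s \<in> S \<Longrightarrow> smooth (F s)) \<Longrightarrow> smooth (\<lambda>x. \<Sum>s\<in>S. F s x)"
  using smooth_sum_partials by blast

lemma partials_sum: "(\<And>s. s \<in> S \<Longrightarrow> smooth (F s)) \<Longrightarrow> partials ws (\<lambda>x. \<Sum>s\<in>S. F s x) = (\<lambda>x. \<Sum>s\<in>S. partials ws (F s) x)"
  using smooth_sum_partials by blast

lemma smooth_diffop: "smooth f \<Longrightarrow> smooth (diffop c f)"
  unfolding diffop_def by (intro smooth_sum smooth_cmult smooth_partials')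

lemma smooth_funpow: "smooth f \<Longrightarrow> smooth ((diffop c ^^ n) f)"
  by (induction n) (auto simp: smooth_diffop)

lemma diffop_sum:
  assumes "\<And>s. s \<in> S \<Longrightarrow> smooth (F s)"
  shows "diffop c (\<lambda>x. \<Sum>s\<in>S. u s * F s x) = (\<lambda>x. \<Sum>s\<in>S. u s * diffop c (F s) x)"
proof -
  have sm: "s \<in> S \<Longrightarrow> smooth (\<lambda>x. u s * F s x)" for s using assms smooth_cmult by blast
  have "partials ws (\<lambda>x. \<Sum>s\<in>S. u s * F s x) = (\<lambda>x. \<Sum>s\<in>S. partials ws (\<lambda>x. u s * F s x) x)" for ws
    using partials_sum[of S "\<lambda>s x. u s * F s x" ws] sm by simp
  also have "\<dots> ws = (\<lambda>x. \<Sum>s\<in>S. u s * partials ws (F s) x)" for ws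
    using partials_cmult[OF assms] by simp
  finally have e: "partials ws (\<lambda>x. \<Sum>s\<in>S. u s * F s x) = (\<lambda>x. \<Sum>s\<in>S. u s * partials ws (F s) x)" for ws .
  show ?thesis
    unfolding diffop_def e
    by (simp add: sum_distrib_left algebra_simps sum.swap[of _ S])
qed

lemma diffop_zero: "diffop c (\<lambda>x. 0) = (\<lambda>x. 0)"
  by (simp add: diffop_def partials_zero)

lemma funpow_zero: "(diffop c ^^ n) (\<lambda>x. 0) = (\<lambda>x. 0)"
  by (induction n) (auto simp: diffop_zero)

lemma partial_partials_comm: "smooth f \<Longrightarrow> partial i (partials ws f) = partials ws (partial i f)"
proof (induction ws)
  case (Cons j ws)
  then show ?case using schwarz[OF smooth_partials'[OF Cons.prems, of ws], of i j] by simp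
qed simp

lemma partials_comm: "smooth f \<Longrightarrow> partials vs (partials ws f) = partials ws (partials vs f)"
proof (induction vs)
  case (Cons i vs)
  then show ?case using partial_partials_comm[OF smooth_partials'[OF Cons.prems, of vs], of i ws] by simp
qed simp

lemma diffop_comm1:
  assumes "smooth f"
  shows "diffop a (diffop b f) = (\<lambda>x. \<Sum>js\<in>{js. b js \<noteq> 0}. b js * (\<Sum>is\<in>{is. a is \<noteq> 0}. a is * partials is (partials js f) x))"
proof -
  have "diffop a (diffop b f) = (\<lambda>x. \<Sum>js\<in>{js. b js \<noteq> 0}. b js * diffop a (partials js f) x)"
    unfolding diffop_def[of b] by (rule diffop_sum) (simp add: smooth_partials' assms)
  then show ?thesis by (simp add: diffop_def)
qed

lemma diffop_comm:
  assumes "smooth f"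
  shows "diffop a (diffop b f) = diffop b (diffop a f)"
  unfolding diffop_comm1[OF assms, of a b] diffop_comm1[OF assms, of b a]
  by (simp add: sum_distrib_left partials_comm[OF assms] sum.swap[of _ "{is. a is \<noteq> 0}"] algebra_simps)

lemma diffop_funpow_comm: "smooth f \<Longrightarrow> diffop b ((diffop a ^^ n) f) = (diffop a ^^ n) (diffop b f)"
  by (induction n) (auto simp: diffop_comm smooth_funpow)

lemma diffop_plus:
  assumes "const_coeff_op a" "const_coeff_op b" "const_coeff_op d" "d = (\<lambda>is. a is + b is)"
  shows "diffop d f = (\<lambda>x. diffop a f x + diffop b f x)"
proof
  fix x
  let ?U = "{is. a is \<noteq> 0} \<union> {is. b is \<noteq> 0} \<union> {is. d is \<noteq> 0}"
  have fin: "finite ?U" using assms(1-3) by (simp add: const_coeff_op_def)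
  have e: "\<And>c. {is. c is \<noteq> 0} \<subseteq> ?U \<Longrightarrow> (\<Sum>is\<in>{is. c is \<noteq> 0}. c is * partials is f x) = (\<Sum>is\<in>?U. c is * partials is f x)"
    by (rule sum.mono_neutral_left[OF fin]) auto
  have "diffop d f x = (\<Sum>is\<in>?U. d is * partials is f x)" unfolding diffop_def by (rule e) auto
  also have "\<dots> = (\<Sum>is\<in>?U. a is * partials is f x) + (\<Sum>is\<in>?U. b is * partials is f x)"
    by (simp add: assms(4) sum.distrib algebra_simps)
  also have "\<dots> = diffop a f x + diffop b f x" unfolding diffop_def by (subst (1 2) e) auto
  finally show "diffop d f x = diffop a f x + diffop b f x" .
qed


theorem theorem4p1:
  fixes q W :: "real^'n::finite \<Rightarrow> real"
    and a b d :: "'n list \<Rightarrow> real"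
    and lam k :: nat
  assumes "C1 q"
    and "const_coeff_op a" and "const_coeff_op b" and "const_coeff_op d"
    and "d = (\<lambda>is. a is + b is)"
    and "smooth W"
    and "(diffop a ^^ (lam + k)) W = q"
    and "(diffop b ^^ (lam + 1)) W = (\<lambda>x. 0)"
  shows "(diffop d ^^ k)
           (\<lambda>x. \<Sum>p = 0..lam. (-1) ^ p * real ((k + p - 1) choose p)
                  * ((diffop a ^^ (lam - p)) ((diffop b ^^ p) W)) x) = q"
proof -
  note sW = assms(6)
  define T where "T n p = (diffop a ^^ n) ((diffop b ^^ p) W)" for n p
  define Q where "Q k m = (\<lambda>x. \<Sum>p = 0..m. coef k p * T (m - p) p x)" for k m
  have smB: "smooth ((diffop b ^^ p) W)" for p using smooth_funpow[OF sW] .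
  have smT: "smooth (T n p)" for n p unfolding T_def using smooth_funpow[OF smB] .
  have Bz: "(diffop b ^^ p) W = (\<lambda>x. 0)" if "p \<ge> lam + 1" for p
  proof -
    have "(diffop b ^^ p) W = (diffop b ^^ (p - (lam + 1))) ((diffop b ^^ (lam + 1)) W)"
      using that by (metis funpow_add le_add_diff_inverse2 o_apply)
    then show ?thesis using assms(8) funpow_zero by simp
  qed
  have TA: "diffop a (T n p) = T (Suc n) p" for n p by (simp add: T_def)
  have TB: "diffop b (T n p) = T n (Suc p)" for n p
    unfolding T_def using diffop_funpow_comm[OF smB, where b=b and a=a and n=n] by simp
  have DT: "diffop d (T n p) = (\<lambda>x. T (Suc n) p x + T n (Suc p) x)" for n p
    using diffop_plus[OF assms(2-5)] TA TB by simp
  have step: "diffop d (Q (Suc k) m) = Q k (Suc m)" if "m \<ge> lam" for k m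
  proof -
    have "diffop d (Q (Suc k) m) = (\<lambda>x. \<Sum>p = 0..m. coef (Suc k) p * diffop d (T (m - p) p) x)"
      unfolding Q_def by (rule diffop_sum) (rule smT)
    also have "\<dots> = (\<lambda>x. \<Sum>p = 0..m. coef (Suc k) p * (T (Suc (m - p)) p x + T (m - p) (Suc p) x))"
      by (simp add: DT)
    also have "\<dots> = Q k (Suc m)"
    proof
      fix x
      have "T 0 (Suc m) x = 0" using Bz[of "Suc m"] that by (simp add: T_def)
      from sum_step[of "\<lambda>n p. T n p x", OF this, of k]
      show "(\<Sum>p = 0..m. coef (Suc k) p * (T (Suc (m - p)) p x + T (m - p) (Suc p) x)) = Q k (Suc m) x"
        by (simp add: Q_def)
    qed
    finally show ?thesis .
  qed
  have main: "\<forall>m\<ge>lam. (diffop d ^^ k) (Q k m) = (diffop a ^^ (m + k)) W"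
  proof (induction k)
    case 0
    have "Q 0 m = (diffop a ^^ m) W" for m
    proof
      fix x
      have "Q 0 m x = (\<Sum>p\<in>{0}. coef 0 p * T (m - p) p x)"
        unfolding Q_def by (rule sum.mono_neutral_right) (auto simp: coef0)
      then show "Q 0 m x = (diffop a ^^ m) W x" by (simp add: coef0 T_def)
    qed
    then show ?case by simp
  next
    case (Suc k)
    show ?case
    proof (intro allI impI)
      fix m assume m: "lam \<le> m"
      have "(diffop d ^^ Suc k) (Q (Suc k) m) = (diffop d ^^ k) (diffop d (Q (Suc k) m))"
        by (simp only: funpow_Suc_right o_apply)
      also have "\<dots> = (diffop d ^^ k) (Q k (Suc m))" using step[OF m] by simp
      also have "\<dots> = (diffop a ^^ (Suc m + k)) W" using Suc m by simp
      finally show "(diffop d ^^ Suc k) (Q (Suc k) m) = (diffop a ^^ (m + Suc k)) W" by simp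
    qed
  qed
  have "(\<lambda>x. \<Sum>p = 0..lam. (-1) ^ p * real ((k + p - 1) choose p)
                  * ((diffop a ^^ (lam - p)) ((diffop b ^^ p) W)) x) = Q k lam"
    by (simp add: Q_def T_def coef_def)
  then show ?thesis using main assms(7) by simp
qed

end
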